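(* Let $\mathcal C\subset\mathbb R^2$ be a nonempty open bounded convex set with $0\in\mathcal C\subset B^2$, where $B^2$ is the open Euclidean unit disc, and let $A,B$ be two distinct points of the unit circle $S^1$. Then for every $R>0$, $$\mu_{\mathcal C}\big(\mathcal B_{\mathcal C}(0,R)\cap\sphericalangle(A0B)\big)\ \le\ \frac{\pi e^{8R}}{\mathrm{vol}(\mathcal B_{\mathcal C}(0,1))}\cdot\frac{\widehat{A0B}}{2},$$ where $\widehat{A0B}\in[0,\pi]$ is the angle defined by $\cos\widehat{A0B}=\langle A,B\rangle$ (Euclidean inner product).
   Context: Let $\mathcal C\subset\mathbb R^m$ be a nonempty open bounded convex set. For distinct $p,q\in\mathcal C$, let $a,b$ be the intersection points of the straight line through $p,q$ with $\partial\mathcal C$, labelled so that $p=(1-s)a+sb$ and $q=(1-t)a+tb$ with $0<s<t<1$; the Hilbert metric is $d_{\mathcal C}(p,q)=\frac12\ln\!\big(\frac{1-s}{s}\cdot\frac{t}{1-t}\big)$, and $d_{\mathcal C}(p,p)=0$. The associated Finsler norm at $p\in\mathcal C$ is $F_{\mathcal C}(p,v)=\frac12\big(\frac1{t^-}+\frac1{t^+}\big)$ for $v\neq0$, where $t^\pm>0$ are the unique numbers with $p-t^-v\in\partial\mathcal C$ and $p+t^+v\in\partial\mathcal C$, and $F_{\mathcal C}(p,0)=0$. Let $B_{\mathcal C}(p)=\{v\in\mathbb R^m : F_{\mathcal C}(p,v)<1\}$, let $\mathrm{vol}$ be Lebesgue measure on $\mathbb R^m$ and $\omega_m$ the Lebesgue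 volume of the Euclidean unit ball (so $\omega_2=\pi$). The Hilbert measure is $\mu_{\mathcal C}(A)=\int_A\frac{\omega_m}{\mathrm{vol}(B_{\mathcal C}(p))}\,d\mathrm{vol}(p)$ for Borel $A\subset\mathcal C$. When $0\in\mathcal C$ and $R>0$, $\mathcal B_{\mathcal C}(0,R)=\{p\in\mathcal C : d_{\mathcal C}(0,p)<R\}$ denotes the open metric ball; $\mathrm{vol}(\mathcal B_{\mathcal C}(0,1))$ is its Lebesgue area. For distinct points $a,b,c\in\mathbb R^2$, $\sphericalangle(bac)$ denotes the sector defined as the convex hull of the union of the half-lines $a+\mathbb R_{+}(b-a)$ and $a+\mathbb R_{+}(c-a)$. The proof may use the known fact (Colbois–Vernicos) that for any such $\mathcal C\subset\mathbb R^m$ with $0\in\mathcal C$, $\mathrm{vol}(\mathcal B_{\mathcal C}(0,R))\le e^{8R}\,\mathrm{vol}(B_{\mathcal C}(p))$ for all $R>0$ and $p\in\mathcal B_{\mathcal C}(0,R)$. *)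

theory Defs
  imports "HOL-Analysis.Analysis"
begin

definition hilbert_dist :: "'a::euclidean_space set \<Rightarrow> 'a \<Rightarrow> 'a \<Rightarrow> real" where
  "hilbert_dist C p q =
     (if p = q then 0 else
      (THE d. \<exists>a b s t. a \<in> frontier C \<and> b \<in> frontier C \<and>
          0 < s \<and> s < t \<and> t < 1 \<and>
          p = (1 - s) *\<^sub>R a + s *\<^sub>R b \<and> q = (1 - t) *\<^sub>R a + t *\<^sub>R b \<and>
          d = (1/2) * ln (((1 - s) / s) * (t / (1 - t)))))"

definition finsler_norm :: "'a::euclidean_space set \<Rightarrow> 'a \<Rightarrow> 'a \<Rightarrow> real" where
  "finsler_norm C p v =
     (if v = 0 then 0 else
      (let tm = (THE t. t > 0 \<and> p - t *\<^sub>R v \<in> frontier C);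
           tp = (THE t. t > 0 \<and> p + t *\<^sub>R v \<in> frontier C)
       in (1/2) * (1 / tm + 1 / tp)))"

definition finsler_ball :: "'a::euclidean_space set \<Rightarrow> 'a \<Rightarrow> 'a set" where
  "finsler_ball C p = {v. finsler_norm C p v < 1}"

definition omega_vol :: "'a::euclidean_space itself \<Rightarrow> real" where
  "omega_vol _ = measure lebesgue (ball (0::'a) 1)"

definition hilbert_measure :: "'a::euclidean_space set \<Rightarrow> 'a set \<Rightarrow> ennreal" where
  "hilbert_measure C A =
     (\<integral>\<^sup>+ p\<in>A. ennreal (omega_vol TYPE('a) / measure lebesgue (finsler_ball C p)) \<partial>lebesgue)"

definition hilbert_ball :: "'a::euclidean_space set \<Rightarrow> 'a \<Rightarrow> real \<Rightarrow> 'a set" where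
  "hilbert_ball C x R = {p \<in> C. hilbert_dist C x p < R}"

definition sector :: "'a::real_vector \<Rightarrow> 'a \<Rightarrow> 'a \<Rightarrow> 'a set" where
  "sector a b c = convex hull ({a + t *\<^sub>R (b - a) | t. t \<ge> 0} \<union> {a + t *\<^sub>R (c - a) | t. t \<ge> 0})"

end

theory Submission
  imports Defs
begin


definition gge :: "'a::euclidean_space set \<Rightarrow> 'a \<Rightarrow> 'a \<Rightarrow> real" where
  "gge D x v = (if v = 0 then 0 else 1 / (THE t. t > 0 \<and> x + t *\<^sub>R v \<in> frontier D))"

lemma ray_unique:
  fixes D :: "'a::euclidean_space set"
  assumes "open D" "bounded D" "convex D" "x \<in> D" "v \<noteq> 0"
  obtains T where "T > 0" "x + T *\<^sub>R v \<in> frontier D"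
    "\<And>t. t > 0 \<Longrightarrow> x + t *\<^sub>R v \<in> D \<longleftrightarrow> t < T"
    "\<And>t. t > 0 \<Longrightarrow> x + t *\<^sub>R v \<in> frontier D \<Longrightarrow> t = T"
proof -
  have intD: "interior D = D" using assms(1) by (simp add: interior_open)
  obtain d where d: "0 < d" "x + d *\<^sub>R v \<in> frontier D"
    "\<And>e. \<lbrakk>0 \<le> e; e < d\<rbrakk> \<Longrightarrow> x + e *\<^sub>R v \<in> interior D"
    using ray_to_frontier[OF assms(2), of x v] assms intD by auto
  have dnot: "x + d *\<^sub>R v \<notin> D" using d(2) intD by (simp add: frontier_def)
  have far: "x + t *\<^sub>R v \<notin> closure D" if "t > d" for t
  proof
    assume cl: "x + t *\<^sub>R v \<in> closure D"
    have sub: "open_segment x (x + t *\<^sub>R v) \<subseteq> interior D"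
      by (rule in_interior_closure_convex_segment) (use assms intD cl in auto)
    have "x + d *\<^sub>R v \<in> open_segment x (x + t *\<^sub>R v)"
    proof -
      have "x + d *\<^sub>R v = (1 - d/t) *\<^sub>R x + (d/t) *\<^sub>R (x + t *\<^sub>R v)"
        using that d(1) by (simp add: algebra_simps)
      moreover have "x \<noteq> x + t *\<^sub>R v" using that d(1) assms(5) by auto
      ultimately show ?thesis using that d(1) unfolding in_segment
        by (intro conjI exI[of _ "d/t"]) (auto simp: field_simps)
    qed
    then show False using sub intD dnot by auto
  qed
  show ?thesis
  proof (rule that[OF d(1) d(2)])
    fix t :: real assume "t > 0"
    show "x + t *\<^sub>R v \<in> D \<longleftrightarrow> t < d"
      using d(3)[of t] intD far[of t] dnot closure_subset \<open>t > 0\<close>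
      by (cases "t < d"; cases "t = d") auto
  next
    fix t :: real assume "t > 0" "x + t *\<^sub>R v \<in> frontier D"
    then show "t = d"
      using d(3)[of t] intD far[of t]
      by (cases "t < d"; cases "t = d") (auto simp: frontier_def)
  qed
qed

locale cbody =
  fixes D :: "'a::euclidean_space set"
  assumes opn: "open D" and bnd: "bounded D" and cvx: "convex D"
begin

lemma gge_T:
  assumes "x \<in> D" "v \<noteq> 0" "T > 0" "x + T *\<^sub>R v \<in> frontier D"
  shows "gge D x v = 1 / T"
proof -
  obtain T' where T': "T' > 0" "x + T' *\<^sub>R v \<in> frontier D"
    "\<And>t. t > 0 \<Longrightarrow> x + t *\<^sub>R v \<in> D \<longleftrightarrow> t < T'"
    "\<And>t. t > 0 \<Longrightarrow> x + t *\<^sub>R v \<in> frontier D \<Longrightarrow> t = T'"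
    by (rule ray_unique[OF opn bnd cvx assms(1,2)]) blast
  have TT: "T = T'" using T'(4) assms(3,4) by blast
  have "(THE t. t > 0 \<and> x + t *\<^sub>R v \<in> frontier D) = T"
  proof (rule the_equality)
    show "T > 0 \<and> x + T *\<^sub>R v \<in> frontier D" using assms by blast
    fix t assume "t > 0 \<and> x + t *\<^sub>R v \<in> frontier D"
    then show "t = T" using T'(4) TT by blast
  qed
  then show ?thesis using assms by (simp add: gge_def)
qed


lemma gge_nonneg: "x \<in> D \<Longrightarrow> 0 \<le> gge D x v"
proof (cases "v = 0")
  case False
  assume x: "x \<in> D"
  obtain T where "T > 0" "x + T *\<^sub>R v \<in> frontier D"
    by (rule ray_unique[OF opn bnd cvx x False]) blast
  then show ?thesis using gge_T[OF x False] by simp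
qed (simp add: gge_def)

lemma gge_char:
  assumes x: "x \<in> D" and t: "t > 0"
  shows "x + t *\<^sub>R v \<in> D \<longleftrightarrow> t * gge D x v < 1"
proof (cases "v = 0")
  case False
  obtain T where T: "T > 0" "x + T *\<^sub>R v \<in> frontier D"
    "\<And>t. t > 0 \<Longrightarrow> x + t *\<^sub>R v \<in> D \<longleftrightarrow> t < T"
    by (rule ray_unique[OF opn bnd cvx x False]) blast
  have g: "gge D x v = 1 / T" using gge_T[OF x False T(1,2)] .
  have "t * (1 / T) < 1 \<longleftrightarrow> t < T" using T(1) by (simp add: field_simps)
  then show ?thesis using g T(3)[OF t] by simp
qed (use x in \<open>simp add: gge_def\<close>)

lemma gge_pos_frontier:
  assumes x: "x \<in> D" and v: "v \<noteq> 0"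
  shows "gge D x v > 0" "x + (1 / gge D x v) *\<^sub>R v \<in> frontier D"
proof -
  obtain T where T: "T > 0" "x + T *\<^sub>R v \<in> frontier D"
    by (rule ray_unique[OF opn bnd cvx x v]) blast
  show "gge D x v > 0" "x + (1 / gge D x v) *\<^sub>R v \<in> frontier D"
    using gge_T[OF x v T] T by auto
qed

lemma gge_lt:
  assumes x: "x \<in> D" and l: "l > 0"
  shows "gge D x v < l \<longleftrightarrow> x + (1 / l) *\<^sub>R v \<in> D"
proof -
  have "(1 / l) * gge D x v < 1 \<longleftrightarrow> gge D x v < l" using l by (simp add: field_simps)
  then show ?thesis using gge_char[OF x, of "1/l" v] l by simp
qed

lemma gge_hom:
  assumes x: "x \<in> D" and c: "c \<ge> 0"
  shows "gge D x (c *\<^sub>R v) = c * gge D x v"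
proof (cases "c = 0 \<or> v = 0")
  case True then show ?thesis by (auto simp: gge_def)
next
  case False
  then have c0: "c > 0" and v: "v \<noteq> 0" using c by auto
  have g: "gge D x v > 0" "x + (1 / gge D x v) *\<^sub>R v \<in> frontier D"
    using gge_pos_frontier[OF x v] by auto
  have "x + (1 / (c * gge D x v)) *\<^sub>R (c *\<^sub>R v) \<in> frontier D"
    using g c0 by simp
  then have "gge D x (c *\<^sub>R v) = 1 / (1 / (c * gge D x v))"
    by (intro gge_T[OF x]) (use c0 v g in auto)
  then show ?thesis by simp
qed

lemma gge_subadd:
  assumes x: "x \<in> D"
  shows "gge D x (v + w) \<le> gge D x v + gge D x w"
proof (rule ccontr)
  assume neg: "\<not> gge D x (v + w) \<le> gge D x v + gge D x w"
  define a where "a = gge D x v"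
  define b where "b = gge D x w"
  define e where "e = (gge D x (v + w) - a - b) / 3"
  have e: "e > 0" using neg by (simp add: e_def a_def b_def)
  have a0: "a \<ge> 0" "b \<ge> 0" using gge_nonneg[OF x] by (auto simp: a_def b_def)
  have p1: "x + (1 / (a + e)) *\<^sub>R v \<in> D" using gge_lt[OF x, of "a+e" v] e a0 by (simp add: a_def)
  have p2: "x + (1 / (b + e)) *\<^sub>R w \<in> D" using gge_lt[OF x, of "b+e" w] e a0 by (simp add: b_def)
  have pos: "a + b + 2 * e > 0" "a + e > 0" "b + e > 0" using e a0 by auto
  define u where "u = (a + e) / (a + b + 2 * e)"
  have u0: "0 \<le> u" unfolding u_def using pos by simp
  have u1: "u \<le> 1" unfolding u_def using pos a0 by (simp add: divide_le_eq)
  note u = u0 u1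
  have "(1 - u) *\<^sub>R (x + (1 / (b + e)) *\<^sub>R w) + u *\<^sub>R (x + (1 / (a + e)) *\<^sub>R v) \<in> D"
    by (rule convexD_alt[OF cvx p2 p1 u])
  moreover have "(1 - u) *\<^sub>R (x + (1 / (b + e)) *\<^sub>R w) + u *\<^sub>R (x + (1 / (a + e)) *\<^sub>R v)
      = x + (1 / (a + b + 2 * e)) *\<^sub>R (v + w)"
  proof -
    have u1': "1 - u = (b + e) / (a + b + 2 * e)" using pos(1) by (simp add: u_def field_simps)
    have s1: "(1 - u) / (b + e) = 1 / (a + b + 2 * e)" using pos(3) by (simp add: u1')
    have s2: "u / (a + e) = 1 / (a + b + 2 * e)" using pos(2) by (simp add: u_def)
    have "(1 - u) *\<^sub>R (x + (1 / (b + e)) *\<^sub>R w) + u *\<^sub>R (x + (1 / (a + e)) *\<^sub>R v)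
       = ((1 - u) + u) *\<^sub>R x + ((1 - u) / (b + e)) *\<^sub>R w + (u / (a + e)) *\<^sub>R v"
      by (simp add: scaleR_add_right scaleR_add_left)
    also have "\<dots> = x + (1 / (a + b + 2 * e)) *\<^sub>R (v + w)"
      unfolding s1 s2 by (simp add: scaleR_add_right)
    finally show ?thesis .
  qed
  ultimately have "gge D x (v + w) < a + b + 2 * e"
    using gge_lt[OF x, of "a + b + 2*e" "v + w"] e a0 by simp
  moreover have "gge D x (v + w) = a + b + 3 * e" unfolding e_def by (simp add: field_simps)
  ultimately show False using e by linarith
qed

lemma gge_convex:
  assumes x: "x \<in> D" and "0 \<le> u" "0 \<le> w" "u + w = 1"
  shows "gge D x (u *\<^sub>R p + w *\<^sub>R q) \<le> u * gge D x p + w * gge D x q"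
proof -
  have "gge D x (u *\<^sub>R p + w *\<^sub>R q) \<le> gge D x (u *\<^sub>R p) + gge D x (w *\<^sub>R q)"
    by (rule gge_subadd[OF x])
  also have "\<dots> = u * gge D x p + w * gge D x q"
    using gge_hom[OF x, of u p] gge_hom[OF x, of w q] assms by simp
  finally show ?thesis .
qed

end


context cbody begin

lemma finsler_formula:
  "finsler_norm D p v = (1/2) * (gge D p (-v) + gge D p v)"
  by (simp add: finsler_norm_def gge_def Let_def)

lemma hdist_formula:
  assumes z: "0 \<in> D" and q: "q \<in> D"
  shows "hilbert_dist D 0 q = (1/2) * ln ((1 + gge D 0 (-q)) / (1 - gge D 0 q))"
proof (cases "q = 0")
  case True
  then show ?thesis by (simp add: hilbert_dist_def gge_def)
next
  case False
  define \<sigma> where "\<sigma> = gge D 0 q"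
  define \<tau> where "\<tau> = gge D 0 (-q)"
  have sp: "\<sigma> > 0" and fb: "0 + (1/\<sigma>) *\<^sub>R q \<in> frontier D"
    using gge_pos_frontier[OF z False] by (auto simp: \<sigma>_def)
  have tp: "\<tau> > 0" and fa: "0 + (1/\<tau>) *\<^sub>R (-q) \<in> frontier D"
    using gge_pos_frontier[OF z, of "-q"] False by (auto simp: \<tau>_def)
  have s1: "\<sigma> < 1" using gge_lt[OF z, of 1 q] q by (simp add: \<sigma>_def)
  define P where "P = (\<lambda>d. \<exists>a b s t. a \<in> frontier D \<and> b \<in> frontier D \<and>
          0 < s \<and> s < t \<and> t < 1 \<and>
          0 = (1 - s) *\<^sub>R a + s *\<^sub>R b \<and> q = (1 - t) *\<^sub>R a + t *\<^sub>R b \<and>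
          d = (1/2) * ln (((1 - s) / s) * (t / (1 - t))))"
  have hd: "hilbert_dist D 0 q = (THE d. P d)"
    using False by (simp add: hilbert_dist_def P_def)
  define target where "target = (1/2) * ln ((1 + \<tau>) / (1 - \<sigma>))"
  have "(THE d. P d) = target"
  proof (rule the_equality)
    define s where "s = \<sigma> / (\<sigma> + \<tau>)"
    define t where "t = \<sigma> * (\<tau> + 1) / (\<sigma> + \<tau>)"
    define a where "a = (1/\<tau>) *\<^sub>R (-q)"
    define b where "b = (1/\<sigma>) *\<^sub>R q"
    have nz: "\<sigma> + \<tau> > 0" using sp tp by simp
    have stt: "\<sigma> * \<tau> < 1 * \<tau>" by (rule mult_strict_right_mono) (use s1 tp in auto)
    have st1: "\<sigma> < \<sigma> * (\<tau> + 1)" using sp tp by (simp add: algebra_simps)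
    have st2: "\<sigma> * (\<tau> + 1) < \<sigma> + \<tau>" using stt by (simp add: algebra_simps)
    have st: "0 < s" "s < t" "t < 1"
      using sp nz st1 st2 by (simp_all add: s_def t_def divide_strict_right_mono)
    have ms: "1 - s = \<tau> / (\<sigma> + \<tau>)" using nz by (simp add: s_def field_simps)
    have mt: "1 - t = \<tau> * (1 - \<sigma>) / (\<sigma> + \<tau>)" using nz by (simp add: t_def field_simps)
    have e1: "(1 - s) *\<^sub>R a + s *\<^sub>R b = (s / \<sigma> - (1 - s) / \<tau>) *\<^sub>R q"
      by (simp add: a_def b_def algebra_simps)
    have e1': "s / \<sigma> - (1 - s) / \<tau> = 0" using sp tp unfolding ms by (simp add: s_def)
    have e2: "(1 - t) *\<^sub>R a + t *\<^sub>R b = (t / \<sigma> - (1 - t) / \<tau>) *\<^sub>R q"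
      by (simp add: a_def b_def algebra_simps)
    have e2a: "t / \<sigma> = (\<tau> + 1) / (\<sigma> + \<tau>)" using sp by (simp add: t_def)
    have e2b: "(1 - t) / \<tau> = (1 - \<sigma>) / (\<sigma> + \<tau>)" using tp unfolding mt by simp
    have e2': "t / \<sigma> - (1 - t) / \<tau> = 1" unfolding e2a e2b using nz
      by (simp add: diff_divide_distrib[symmetric])
    have e3a: "(1 - s) / s = \<tau> / \<sigma>" unfolding ms using nz sp by (simp add: s_def)
    have e3b: "t / (1 - t) = \<sigma> * (\<tau> + 1) / (\<tau> * (1 - \<sigma>))" unfolding mt using nz
      by (simp add: t_def)
    have e3: "((1 - s) / s) * (t / (1 - t)) = (1 + \<tau>) / (1 - \<sigma>)"
      unfolding e3a e3b using sp tp s1 by (simp add: field_simps)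
    show "P target" unfolding P_def
      apply (rule exI[of _ a], rule exI[of _ b], rule exI[of _ s], rule exI[of _ t])
      using fa fb st e1 e1' e2 e2' e3 by (simp add: a_def b_def target_def)
  next
    fix d assume "P d"
    then obtain a b s t where ab: "a \<in> frontier D" "b \<in> frontier D"
      and st: "0 < s" "s < t" "t < 1"
      and h0: "0 = (1 - s) *\<^sub>R a + s *\<^sub>R b" and hq: "q = (1 - t) *\<^sub>R a + t *\<^sub>R b"
      and hdd: "d = (1/2) * ln (((1 - s) / s) * (t / (1 - t)))"
      unfolding P_def by blast
    have "q = q - 0" by simp
    also have "\<dots> = ((1 - t) *\<^sub>R a + t *\<^sub>R b) - ((1 - s) *\<^sub>R a + s *\<^sub>R b)" using h0 hq by simp
    also have "\<dots> = (t - s) *\<^sub>R (b - a)" by (simp add: algebra_simps)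
    finally have qba: "q = (t - s) *\<^sub>R (b - a)" .
    have bma: "b - a = (1 / (t - s)) *\<^sub>R q" using qba st by simp
    have "0 = a + s *\<^sub>R (b - a)" using h0 by (simp add: algebra_simps)
    then have ha: "a = (s / (t - s)) *\<^sub>R (-q)" using bma by (simp add: eq_neg_iff_add_eq_0 add.commute)
    have hb: "b = ((1 - s) / (t - s)) *\<^sub>R q"
    proof -
      have "b = a + (b - a)" by simp
      also have "\<dots> = (1 / (t - s) - s / (t - s)) *\<^sub>R q" using ha bma
        by (simp add: scaleR_left_diff_distrib)
      also have "1 / (t - s) - s / (t - s) = (1 - s) / (t - s)" by (simp add: diff_divide_distrib)
      finally show ?thesis .
    qed
    have tau: "\<tau> = 1 / (s / (t - s))"
      unfolding \<tau>_def
      by (rule gge_T[OF z]) (use False st ab(1) ha in auto)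
    have sig: "\<sigma> = 1 / ((1 - s) / (t - s))"
      unfolding \<sigma>_def
      by (rule gge_T[OF z]) (use False st ab(2) hb in auto)
    have "((1 - s) / s) * (t / (1 - t)) = (1 + \<tau>) / (1 - \<sigma>)"
      using st unfolding tau sig by (simp add: field_simps)
    then show "d = target" using hdd by (simp add: target_def)
  qed
  then show ?thesis using hd by (simp add: target_def \<sigma>_def \<tau>_def)
qed

end


locale cb0 = cbody +
  assumes z: "0 \<in> D" and sub: "D \<subseteq> ball 0 1"
begin

lemma mem_iff: "q \<in> D \<longleftrightarrow> gge D 0 q < 1"
  using gge_lt[OF z, of 1 q] by simp

lemma hball_eq:
  "hilbert_ball D 0 r = {q. gge D 0 (-q) + exp (2 * r) * gge D 0 q < exp (2 * r) - 1}"
proof (intro set_eqI iffI)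
  fix q assume "q \<in> hilbert_ball D 0 r"
  then have q: "q \<in> D" and d: "hilbert_dist D 0 q < r" by (auto simp: hilbert_ball_def)
  have s1: "gge D 0 q < 1" using q mem_iff by simp
  have t0: "gge D 0 (-q) \<ge> 0" by (rule gge_nonneg[OF z])
  define X where "X = (1 + gge D 0 (-q)) / (1 - gge D 0 q)"
  have Xp: "X > 0" using s1 t0 by (simp add: X_def)
  have "ln X < 2 * r" using d hdist_formula[OF z q] by (simp add: X_def)
  then have "X < exp (2 * r)" using Xp by (metis exp_less_cancel_iff exp_ln)
  then have "1 + gge D 0 (-q) < exp (2 * r) * (1 - gge D 0 q)"
    using s1 by (simp add: X_def pos_divide_less_eq)
  then show "q \<in> {q. gge D 0 (-q) + exp (2 * r) * gge D 0 q < exp (2 * r) - 1}"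
    by (simp add: algebra_simps)
next
  fix q assume "q \<in> {q. gge D 0 (-q) + exp (2 * r) * gge D 0 q < exp (2 * r) - 1}"
  then have h: "gge D 0 (-q) + exp (2 * r) * gge D 0 q < exp (2 * r) - 1" by simp
  have t0: "gge D 0 (-q) \<ge> 0" by (rule gge_nonneg[OF z])
  have E1: "exp (2 * r) * gge D 0 q < exp (2 * r) * 1" using h t0 by linarith
  then have s1: "gge D 0 q < 1" by (simp only: mult_less_cancel_left_pos[OF exp_gt_zero])
  then have q: "q \<in> D" using mem_iff by simp
  have h2: "1 + gge D 0 (-q) < exp (2 * r) * (1 - gge D 0 q)"
    using h by (simp add: algebra_simps)
  define X where "X = (1 + gge D 0 (-q)) / (1 - gge D 0 q)"
  have Xp: "X > 0" using s1 t0 by (simp add: X_def)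
  have "X < exp (2 * r)" using h2 s1 by (simp add: X_def pos_divide_less_eq)
  then have "ln X < 2 * r" using Xp by (metis ln_less_cancel_iff exp_gt_zero ln_exp)
  then have "hilbert_dist D 0 q < r" using hdist_formula[OF z q] by (simp add: X_def)
  then show "q \<in> hilbert_ball D 0 r" using q by (simp add: hilbert_ball_def)
qed

lemma gge_ge_norm: "norm v \<le> gge D 0 v"
proof (rule ccontr)
  assume "\<not> ?thesis"
  then have lt: "gge D 0 v < norm v" by simp
  then have v: "v \<noteq> 0" using gge_nonneg[OF z, of v] by auto
  have "0 + (1 / norm v) *\<^sub>R v \<in> D" using gge_lt[OF z, of "norm v" v] lt v by simp
  then show False using sub v by auto
qed

lemma gge_p_ge:
  assumes p: "p \<in> D" shows "norm v \<le> 2 * gge D p v"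
proof (rule ccontr)
  assume "\<not> ?thesis"
  then have lt: "gge D p v < norm v / 2" by simp
  then have v: "v \<noteq> 0" using gge_nonneg[OF p, of v] by auto
  have "p + (1 / (norm v / 2)) *\<^sub>R v \<in> D" using gge_lt[OF p, of "norm v / 2" v] lt v by simp
  then have n1: "norm (p + (2 / norm v) *\<^sub>R v) < 1" using sub by auto
  have n2: "norm p < 1" using p sub by auto
  have "norm ((2 / norm v) *\<^sub>R v) = 2" using v by simp
  moreover have "norm ((2 / norm v) *\<^sub>R v) \<le> norm (p + (2 / norm v) *\<^sub>R v) + norm p"
    by (metis add.commute add_diff_cancel_left' norm_triangle_ineq4)
  ultimately show False using n1 n2 by linarith
qed

lemma gge_upper: obtains r where "r > 0" "\<And>v. gge D 0 v \<le> norm v / r"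
proof -
  obtain r where r: "r > 0" "ball 0 r \<subseteq> D" using opn z open_contains_ball by blast
  have "gge D 0 v \<le> norm v / r" for v
  proof (rule ccontr)
    assume "\<not> ?thesis"
    then have lt: "norm v / r < gge D 0 v" by simp
    define nr where "nr = norm v / r"
    define l where "l = (nr + gge D 0 v) / 2"
    have lt': "nr < gge D 0 v" using lt by (simp add: nr_def)
    have l1: "nr < l" using lt' by (simp add: l_def)
    have l2: "l < gge D 0 v" using lt' by (simp add: l_def)
    note l = l1 l2
    have lp: "l > 0" using l(1) r(1) unfolding nr_def by (smt (verit) divide_nonneg_pos norm_ge_zero)
    have "norm ((1 / l) *\<^sub>R v) = norm v / l" using lp by simp
    also have "\<dots> < r" using l(1) lp r(1) unfolding nr_def by (simp add: divide_less_eq mult.commute pos_divide_less_eq)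
    finally have "0 + (1 / l) *\<^sub>R v \<in> D" using r(2) by auto
    then have "gge D 0 v < l" using gge_lt[OF z lp, of v] by simp
    then show False using l(2) by simp
  qed
  then show ?thesis using that r(1) by blast
qed

lemma gge_shift:
  assumes p: "p \<in> D"
  shows "gge D p v * (1 - gge D 0 p) \<le> gge D 0 v"
proof (rule ccontr)
  assume "\<not> ?thesis"
  then have lt: "gge D 0 v < gge D p v * (1 - gge D 0 p)" by simp
  define \<sigma> where "\<sigma> = gge D 0 p"
  define G where "G = gge D 0 v"
  define Gp where "Gp = gge D p v"
  have s1: "\<sigma> < 1" using p mem_iff by (simp add: \<sigma>_def)
  have s0: "\<sigma> \<ge> 0" using gge_nonneg[OF z] by (simp add: \<sigma>_def)
  have G0: "G \<ge> 0" using gge_nonneg[OF z] by (simp add: G_def)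
  have Gp0: "Gp > 0" using lt G0 s1 unfolding G_def Gp_def \<sigma>_def
    by (smt (verit, best) mult_nonpos_nonneg gge_nonneg[OF p])
  define t where "t = 1 / Gp"
  have tp: "t > 0" using Gp0 by (simp add: t_def)
  have notin: "p + t *\<^sub>R v \<notin> D" using gge_char[OF p tp, of v] Gp0 by (simp add: t_def Gp_def)
  have tG: "t * G < 1 - \<sigma>" using lt Gp0 by (simp add: t_def G_def Gp_def \<sigma>_def divide_less_eq mult.commute)
  define e where "e = (1 - \<sigma> - t * G) / 2"
  have e: "e > 0" using tG by (simp add: e_def)
  define \<sigma>' where "\<sigma>' = \<sigma> + e"
  have s': "\<sigma> < \<sigma>'" "\<sigma>' < 1" "t * G < 1 - \<sigma>'" using e tG s0 mult_nonneg_nonneg[OF less_imp_le[OF tp] G0] unfolding \<sigma>'_def e_def by (simp_all add: field_simps)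
  have s'p: "\<sigma>' > 0" using s' s0 by simp
  have p1: "0 + (1 / \<sigma>') *\<^sub>R p \<in> D" using gge_lt[OF z s'p, of p] s' by (simp add: \<sigma>_def)
  have lp: "(1 - \<sigma>') / t > 0" using s' tp by simp
  have "G < (1 - \<sigma>') / t" using s'(3) tp by (simp add: pos_less_divide_eq mult.commute)
  then have p2: "0 + (1 / ((1 - \<sigma>') / t)) *\<^sub>R v \<in> D" using gge_lt[OF z lp, of v] by (simp add: G_def)
  have "(1 - \<sigma>') *\<^sub>R ((t / (1 - \<sigma>')) *\<^sub>R v) + \<sigma>' *\<^sub>R ((1 / \<sigma>') *\<^sub>R p) \<in> D"
    by (rule convexD_alt[OF cvx]) (use p1 p2 s' s'p in auto)
  moreover have "(1 - \<sigma>') *\<^sub>R ((t / (1 - \<sigma>')) *\<^sub>R v) + \<sigma>' *\<^sub>R ((1 / \<sigma>') *\<^sub>R p) = p + t *\<^sub>R v"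
    using s' s'p by (simp add: add.commute)
  ultimately show False using notin by simp
qed

lemma fball_eq: "finsler_ball D p = {v. gge D p (-v) + gge D p v < 2}"
  by (auto simp: finsler_ball_def finsler_formula)

lemma fball_convex: assumes p: "p \<in> D" shows "convex (finsler_ball D p)"
  unfolding fball_eq convex_def
proof (intro ballI allI impI)
  fix x y :: 'a and u w :: real
  assume x: "x \<in> {v. gge D p (- v) + gge D p v < 2}" and y: "y \<in> {v. gge D p (- v) + gge D p v < 2}"
    and u: "0 \<le> u" and w: "0 \<le> w" and uw: "u + w = 1"
  have a: "gge D p (u *\<^sub>R x + w *\<^sub>R y) \<le> u * gge D p x + w * gge D p y"
    by (rule gge_convex[OF p u w uw])
  have b: "gge D p (-(u *\<^sub>R x + w *\<^sub>R y)) \<le> u * gge D p (-x) + w * gge D p (-y)"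
    using gge_convex[OF p u w uw, of "-x" "-y"] by (simp add: algebra_simps)
  have "u * (gge D p (-x) + gge D p x) + w * (gge D p (-y) + gge D p y) < 2"
    by (rule convex_bound_lt) (use x y u w uw in auto)
  then show "u *\<^sub>R x + w *\<^sub>R y \<in> {v. gge D p (- v) + gge D p v < 2}"
    using a b by (simp add: algebra_simps)
qed

lemma fball_bounded: assumes p: "p \<in> D" shows "bounded (finsler_ball D p)"
proof -
  have "finsler_ball D p \<subseteq> cball 0 4"
  proof
    fix v assume "v \<in> finsler_ball D p"
    then have "gge D p (-v) + gge D p v < 2" by (simp add: fball_eq)
    moreover have "gge D p (-v) \<ge> 0" by (rule gge_nonneg[OF p])
    moreover have "norm v \<le> 2 * gge D p v" by (rule gge_p_ge[OF p])
    ultimately show "v \<in> cball 0 4" by simp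
  qed
  then show ?thesis using bounded_cball bounded_subset by blast
qed

lemma hball_convex: "convex (hilbert_ball D 0 r)"
  unfolding hball_eq convex_def
proof (intro ballI allI impI)
  define E where "E = exp (2 * r)"
  fix x y :: 'a and u w :: real
  assume x: "x \<in> {q. gge D 0 (-q) + exp (2 * r) * gge D 0 q < exp (2 * r) - 1}"
    and y: "y \<in> {q. gge D 0 (-q) + exp (2 * r) * gge D 0 q < exp (2 * r) - 1}"
    and u: "0 \<le> u" and w: "0 \<le> w" and uw: "u + w = 1"
  have E: "E > 0" by (simp add: E_def)
  have a: "gge D 0 (u *\<^sub>R x + w *\<^sub>R y) \<le> u * gge D 0 x + w * gge D 0 y"
    by (rule gge_convex[OF z u w uw])
  have b: "gge D 0 (-(u *\<^sub>R x + w *\<^sub>R y)) \<le> u * gge D 0 (-x) + w * gge D 0 (-y)"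
    using gge_convex[OF z u w uw, of "-x" "-y"] by (simp add: algebra_simps)
  have "u * (gge D 0 (-x) + E * gge D 0 x) + w * (gge D 0 (-y) + E * gge D 0 y) < E - 1"
    by (rule convex_bound_lt) (use x y u w uw in \<open>auto simp: E_def\<close>)
  moreover have "E * gge D 0 (u *\<^sub>R x + w *\<^sub>R y) \<le> E * (u * gge D 0 x + w * gge D 0 y)"
    using a E by simp
  ultimately have "gge D 0 (-(u *\<^sub>R x + w *\<^sub>R y)) + E * gge D 0 (u *\<^sub>R x + w *\<^sub>R y) < E - 1"
    using b by (simp add: algebra_simps)
  then show "u *\<^sub>R x + w *\<^sub>R y \<in> {q. gge D 0 (-q) + exp (2 * r) * gge D 0 q < exp (2 * r) - 1}"
    by (simp add: E_def)
qed

lemma hball_sub: "hilbert_ball D 0 r \<subseteq> D"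
  by (auto simp: hilbert_ball_def)

lemma hball_bounded: "bounded (hilbert_ball D 0 r)"
  using hball_sub bnd bounded_subset by blast

end


context cb0 begin

lemma fball_lmeas: "p \<in> D \<Longrightarrow> finsler_ball D p \<in> lmeasurable"
  by (intro measurable_convex fball_convex fball_bounded)

lemma hball_lmeas: "hilbert_ball D 0 r \<in> lmeasurable"
  by (intro measurable_convex hball_convex hball_bounded)

lemma scaled_lmeas: "p \<in> D \<Longrightarrow> (\<lambda>x. c *\<^sub>R x) ` finsler_ball D p \<in> lmeasurable"
  by (intro measurable_convex convex_scaling bounded_scaling fball_convex fball_bounded)

lemma measure_scaled: "measure lebesgue ((\<lambda>x. c *\<^sub>R x) ` S) = \<bar>c\<bar> ^ DIM('a) * measure lebesgue (S :: 'a set)"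
  using measure_lebesgue_affine[of c 0 S] by simp

lemma incl1:
  defines "k \<equiv> (exp 2 - 1) / 2"
  shows "hilbert_ball D 0 1 \<subseteq> (\<lambda>x. k *\<^sub>R x) ` finsler_ball D 0"
proof
  fix q assume "q \<in> hilbert_ball D 0 1"
  then have h: "gge D 0 (-q) + exp 2 * gge D 0 q < exp 2 - 1" by (simp add: hball_eq)
  have e2: "exp (2::real) \<ge> 1" by simp
  have kp: "k > 0" unfolding k_def using exp_gt_one[of 2] by simp
  have g0: "gge D 0 q \<ge> 0" by (rule gge_nonneg[OF z])
  have "gge D 0 q \<le> exp 2 * gge D 0 q" using e2 g0 by (simp add: mult_le_cancel_right1)
  then have s: "gge D 0 (-q) + gge D 0 q < 2 * k" using h by (simp add: k_def)
  define w where "w = (1 / k) *\<^sub>R q"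
  have "gge D 0 (-w) = (1/k) * gge D 0 (-q)"
    using gge_hom[OF z, of "1/k" "-q"] kp by (simp add: w_def)
  moreover have "gge D 0 w = (1/k) * gge D 0 q"
    using gge_hom[OF z, of "1/k" "q"] kp by (simp add: w_def)
  ultimately have "gge D 0 (-w) + gge D 0 w = (gge D 0 (-q) + gge D 0 q) / k"
    by (simp add: add_divide_distrib)
  also have "\<dots> < 2" using s kp by (simp add: divide_less_eq)
  finally have "w \<in> finsler_ball D 0" by (simp add: fball_eq)
  moreover have "q = k *\<^sub>R w" using kp by (simp add: w_def)
  ultimately show "q \<in> (\<lambda>x. k *\<^sub>R x) ` finsler_ball D 0" by blast
qed

lemma meas1:
  "measure lebesgue (hilbert_ball D 0 1) \<le> ((exp 2 - 1) / 2) ^ DIM('a) * measure lebesgue (finsler_ball D 0)"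
proof -
  have kp: "(exp 2 - 1) / 2 > (0::real)" using exp_gt_one[of 2] by simp
  have "measure lebesgue (hilbert_ball D 0 1) \<le> measure lebesgue ((\<lambda>x. ((exp 2 - 1) / 2) *\<^sub>R x) ` finsler_ball D 0)"
    by (rule measure_mono_fmeasurable[OF incl1]) (use hball_lmeas scaled_lmeas z in auto)
  also have "\<dots> = ((exp 2 - 1) / 2) ^ DIM('a) * measure lebesgue (finsler_ball D 0)"
    using kp by (simp add: measure_scaled)
  finally show ?thesis .
qed

lemma hR_facts:
  assumes "p \<in> hilbert_ball D 0 R"
  shows "p \<in> D" "exp (2 * R) * (1 - gge D 0 p) > 1" "norm p < 1 - exp (- 2 * R)"
proof -
  have h: "gge D 0 (-p) + exp (2 * R) * gge D 0 p < exp (2 * R) - 1" using assms by (simp add: hball_eq)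
  show "p \<in> D" using assms hball_sub by auto
  have t0: "gge D 0 (-p) \<ge> 0" by (rule gge_nonneg[OF z])
  show c: "exp (2 * R) * (1 - gge D 0 p) > 1" using h t0 by (simp add: algebra_simps)
  have "norm p \<le> gge D 0 p" by (rule gge_ge_norm)
  moreover have "gge D 0 p < 1 - 1 / exp (2 * R)"
  proof -
    have "1 < exp (2 * R) * (1 - gge D 0 p)" by (rule c)
    then have "1 / exp (2 * R) < 1 - gge D 0 p" by (simp add: divide_less_eq mult.commute)
    then show ?thesis by simp
  qed
  moreover have "exp (- 2 * R) = 1 / exp (2 * R)"
  proof -
    have "exp (2 * R) * exp (- 2 * R) = 1" by (simp add: exp_add[symmetric])
    then show ?thesis by (simp add: field_simps)
  qed
  ultimately show "norm p < 1 - exp (- 2 * R)" by linarith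
qed

lemma incl2:
  assumes p: "p \<in> D"
  shows "(\<lambda>x. (1 - gge D 0 p) *\<^sub>R x) ` finsler_ball D 0 \<subseteq> finsler_ball D p"
proof
  fix v assume "v \<in> (\<lambda>x. (1 - gge D 0 p) *\<^sub>R x) ` finsler_ball D 0"
  then obtain w where w: "w \<in> finsler_ball D 0" and v: "v = (1 - gge D 0 p) *\<^sub>R w" by blast
  define c where "c = 1 - gge D 0 p"
  have cp: "c > 0" using p mem_iff by (simp add: c_def)
  have a: "gge D p v * c \<le> c * gge D 0 w"
    using gge_shift[OF p, of v] gge_hom[OF z, of c w] cp by (simp add: v c_def)
  have b: "gge D p (-v) * c \<le> c * gge D 0 (-w)"
    using gge_shift[OF p, of "-v"] gge_hom[OF z, of c "-w"] cp by (simp add: v c_def)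
  have a': "gge D p v \<le> gge D 0 w" using a cp by (simp add: mult.commute)
  have b': "gge D p (-v) \<le> gge D 0 (-w)" using b cp by (simp add: mult.commute)
  have "gge D 0 (-w) + gge D 0 w < 2" using w by (simp add: fball_eq)
  then show "v \<in> finsler_ball D p" using a' b' by (simp add: fball_eq)
qed

lemma meas2:
  assumes p: "p \<in> D"
  shows "(1 - gge D 0 p) ^ DIM('a) * measure lebesgue (finsler_ball D 0) \<le> measure lebesgue (finsler_ball D p)"
proof -
  have cp: "1 - gge D 0 p > 0" using p mem_iff by simp
  have "measure lebesgue ((\<lambda>x. (1 - gge D 0 p) *\<^sub>R x) ` finsler_ball D 0) \<le> measure lebesgue (finsler_ball D p)"
    by (rule measure_mono_fmeasurable[OF incl2[OF p]]) (use fball_lmeas scaled_lmeas z p in auto)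
  then show ?thesis using cp by (simp add: measure_scaled)
qed

lemma meas_pos: "measure lebesgue (hilbert_ball D 0 1) > 0"
proof -
  obtain r where r: "r > 0" "\<And>v. gge D 0 v \<le> norm v / r" using gge_upper by blast
  have "ball 0 (r/4) \<subseteq> hilbert_ball D 0 1"
  proof
    fix q :: 'a assume "q \<in> ball 0 (r/4)"
    then have nq: "norm q < r/4" by simp
    have nq4: "norm q / r < 1/4" using nq r(1) by (simp add: divide_less_eq)
    have a: "gge D 0 q < 1/4" using r(2)[of q] nq4 by linarith
    have bb: "gge D 0 (-q) \<le> norm q / r" using r(2)[of "-q"] by simp
    have b: "gge D 0 (-q) < 1/4" using bb nq4 by linarith
    have g0: "gge D 0 q \<ge> 0" by (rule gge_nonneg[OF z])
    have e3: "exp (2::real) \<ge> 3" using exp_ge_add_one_self[of 2] by simp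
    have "exp 2 * gge D 0 q \<le> exp 2 * (1/4)" by (rule mult_left_mono) (use a in auto)
    then have "gge D 0 (-q) + exp 2 * gge D 0 q < exp 2 - 1" using b e3 by linarith
    then show "q \<in> hilbert_ball D 0 1" by (simp add: hball_eq)
  qed
  then have "measure lebesgue (ball (0::'a) (r/4)) \<le> measure lebesgue (hilbert_ball D 0 1)"
    by (rule measure_mono_fmeasurable) (use hball_lmeas in auto)
  moreover have "measure lebesgue (ball (0::'a) (r/4)) = measure lborel (ball (0::'a) (r/4))" by simp
  moreover have "measure lborel (ball (0::'a) (r/4)) > 0"
    using r(1) content_ball_pos[of "r/4" "0::'a"] by simp
  ultimately show ?thesis by linarith
qed

end


definition det2 :: "real^2 \<Rightarrow> real^2 \<Rightarrow> real" where
  "det2 u w = u$1 * w$2 - u$2 * w$1"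

lemma inner2: "(u::real^2) \<bullet> w = u$1*w$1 + u$2*w$2"
  by (simp add: inner_vec_def sum_2)

lemma det2_sq:
  fixes u w :: "real^2"
  assumes "norm u = 1" "norm w = 1"
  shows "(det2 u w)\<^sup>2 = 1 - (u \<bullet> w)\<^sup>2"
proof -
  have uu: "u \<bullet> u = 1" "w \<bullet> w = 1" using assms by (simp_all add: power2_norm_eq_inner[symmetric])
  have "(det2 u w)\<^sup>2 + (u \<bullet> w)\<^sup>2 = (u \<bullet> u) * (w \<bullet> w)"
    unfolding det2_def inner2 power2_eq_square by algebra
  then show ?thesis using uu by simp
qed

lemma tri_incl:
  fixes u w :: "real^2"
  assumes nu: "norm u = 1" and nw: "norm w = 1" and c: "u \<bullet> w \<ge> 0" and rho: "\<rho> > 0"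
    and ab: "\<alpha> \<ge> 0" "\<beta> \<ge> 0" and nx: "norm (\<alpha> *\<^sub>R u + \<beta> *\<^sub>R w) < \<rho>"
  shows "\<alpha> *\<^sub>R u + \<beta> *\<^sub>R w \<in> convex hull {0, (\<rho> * sqrt (2 + 2 * (u \<bullet> w)) / (1 + u \<bullet> w)) *\<^sub>R u,
                                          (\<rho> * sqrt (2 + 2 * (u \<bullet> w)) / (1 + u \<bullet> w)) *\<^sub>R w}"
proof -
  define c1 where "c1 = u \<bullet> w"
  define L where "L = \<rho> * sqrt (2 + 2 * c1) / (1 + c1)"
  define x where "x = \<alpha> *\<^sub>R u + \<beta> *\<^sub>R w"
  have uu: "u \<bullet> u = 1" "w \<bullet> w = 1" using nu nw by (simp_all add: power2_norm_eq_inner[symmetric])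
  have c1: "c1 \<ge> 0" using c by (simp add: c1_def)
  have xi: "x \<bullet> (u + w) = (\<alpha> + \<beta>) * (1 + c1)"
    using uu by (simp add: x_def c1_def inner_add_left inner_add_right inner_commute algebra_simps)
  have nuw: "norm (u + w) = sqrt (2 + 2 * c1)"
    using uu by (simp add: norm_eq_sqrt_inner c1_def inner_add_left inner_add_right inner_commute)
  have sq: "sqrt (2 + 2 * c1) > 0" using c1 by simp
  have "x \<bullet> (u + w) \<le> norm x * norm (u + w)" by (rule norm_cauchy_schwarz)
  also have "\<dots> < \<rho> * sqrt (2 + 2 * c1)" using nx sq nuw by (simp add: x_def)
  finally have "(\<alpha> + \<beta>) * (1 + c1) < \<rho> * sqrt (2 + 2 * c1)" using xi by simp
  then have lt: "\<alpha> + \<beta> < L" using c1 by (simp add: L_def pos_less_divide_eq)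
  have Lp: "L > 0" using ab lt by linarith
  have "x = (1 - (\<alpha> + \<beta>) / L) *\<^sub>R 0 + (\<alpha> / L) *\<^sub>R (L *\<^sub>R u) + (\<beta> / L) *\<^sub>R (L *\<^sub>R w)"
    using Lp by (simp add: x_def)
  moreover have "0 \<le> 1 - (\<alpha> + \<beta>) / L" using lt Lp by simp
  moreover have "0 \<le> \<alpha> / L" "0 \<le> \<beta> / L" using ab Lp by simp_all
  moreover have "(1 - (\<alpha> + \<beta>) / L) + \<alpha> / L + \<beta> / L = 1" using Lp by (simp add: field_simps)
  ultimately have "x \<in> convex hull {0, L *\<^sub>R u, L *\<^sub>R w}"
    unfolding convex_hull_3 by blast
  then show ?thesis by (simp add: x_def L_def c1_def)
qed

lemma tri_meas:
  fixes u w :: "real^2"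
  assumes c: "u \<bullet> w \<ge> 0"
  shows "measure lebesgue (convex hull {0, (\<rho> * sqrt (2 + 2 * (u \<bullet> w)) / (1 + u \<bullet> w)) *\<^sub>R u,
                                          (\<rho> * sqrt (2 + 2 * (u \<bullet> w)) / (1 + u \<bullet> w)) *\<^sub>R w})
         = \<rho>\<^sup>2 * \<bar>det2 u w\<bar> / (1 + u \<bullet> w)"
proof -
  define c1 where "c1 = u \<bullet> w"
  define L where "L = \<rho> * sqrt (2 + 2 * c1) / (1 + c1)"
  have c1: "c1 \<ge> 0" using c by (simp add: c1_def)
  have cmp: "compact (convex hull {0, L *\<^sub>R u, L *\<^sub>R w})"
    by (intro finite_imp_compact_convex_hull) auto
  then have bor: "convex hull {0, L *\<^sub>R u, L *\<^sub>R w} \<in> sets borel"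
    by (intro borel_closed compact_imp_closed)
  have "measure lebesgue (convex hull {0, L *\<^sub>R u, L *\<^sub>R w}) = measure lborel (convex hull {0, L *\<^sub>R u, L *\<^sub>R w})"
    using bor by simp
  also have "\<dots> = \<bar>(L * w $ 1 - 0) * (L * u $ 2 - 0) - (L * u $ 1 - 0) * (L * w $ 2 - 0)\<bar> / 2"
    using content_triangle[of 0 "L *\<^sub>R u" "L *\<^sub>R w"] by simp
  also have "\<dots> = L\<^sup>2 * \<bar>det2 u w\<bar> / 2"
  proof -
    have "(L * w $ 1 - 0) * (L * u $ 2 - 0) - (L * u $ 1 - 0) * (L * w $ 2 - 0) = - (L\<^sup>2 * det2 u w)"
      by (simp add: det2_def power2_eq_square algebra_simps)
    then show ?thesis by (simp add: abs_mult)
  qed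
  also have "L\<^sup>2 = \<rho>\<^sup>2 * 2 / (1 + c1)"
  proof -
    have "L\<^sup>2 = \<rho>\<^sup>2 * (sqrt (2 + 2 * c1))\<^sup>2 / (1 + c1)\<^sup>2" by (simp add: L_def power_divide power_mult_distrib)
    also have "(sqrt (2 + 2 * c1))\<^sup>2 = 2 * (1 + c1)" using c1 by simp
    finally have "L\<^sup>2 = (\<rho>\<^sup>2 * 2) * (1 + c1) / ((1 + c1) * (1 + c1))"
      by (simp add: power2_eq_square mult.assoc)
    also have "\<dots> = (\<rho>\<^sup>2 * 2) / (1 + c1)"
      using c1 by (intro nonzero_mult_divide_mult_cancel_right) simp
    finally show ?thesis by simp
  qed
  finally show ?thesis using c1 by (simp add: L_def c1_def field_simps)
qed


lemma bisector:
  fixes A B :: "real^2"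
  assumes nA: "norm A = 1" and nB: "norm B = 1"
  obtains m where "norm m = 1" "A \<bullet> m \<ge> 0" "B \<bullet> m = A \<bullet> m" "2 * (A \<bullet> m)\<^sup>2 - 1 = A \<bullet> B"
    "\<And>\<alpha> \<beta>. \<alpha> \<ge> 0 \<Longrightarrow> \<beta> \<ge> 0 \<Longrightarrow> (\<exists>a b. a \<ge> 0 \<and> b \<ge> 0 \<and>
        (\<alpha> *\<^sub>R A + \<beta> *\<^sub>R B = a *\<^sub>R A + b *\<^sub>R m \<or> \<alpha> *\<^sub>R A + \<beta> *\<^sub>R B = a *\<^sub>R m + b *\<^sub>R B))"
proof (cases "A + B = 0")
  case False
  define n where "n = norm (A + B)"
  have np: "n > 0" using False by (simp add: n_def)
  define m where "m = (1 / n) *\<^sub>R (A + B)"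
  have AA: "A \<bullet> A = 1" "B \<bullet> B = 1" using nA nB by (simp_all add: power2_norm_eq_inner[symmetric])
  have n2: "n\<^sup>2 = 2 * (1 + A \<bullet> B)"
    using AA by (simp add: n_def power2_norm_eq_inner inner_add_left inner_add_right inner_commute)
  have nm: "norm m = 1" using np by (simp add: m_def n_def)
  have Am: "A \<bullet> m = (1 + A \<bullet> B) / n" using AA by (simp add: m_def inner_add_right)
  have Bm: "B \<bullet> m = A \<bullet> m" using AA by (simp add: m_def inner_add_right inner_commute add.commute)
  have cpos: "1 + A \<bullet> B > 0" using n2 np
    by (smt (verit, best) zero_less_power)
  have Am0: "A \<bullet> m \<ge> 0" using cpos np Am by simp
  have dbl: "2 * (A \<bullet> m)\<^sup>2 - 1 = A \<bullet> B"
  proof -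
    define cc where "cc = 1 + A \<bullet> B"
    have ccp: "cc > 0" using cpos by (simp add: cc_def)
    have "2 * (A \<bullet> m)\<^sup>2 = 2 * cc\<^sup>2 / n\<^sup>2" by (simp add: Am power_divide cc_def)
    also have "\<dots> = 2 * cc\<^sup>2 / (2 * cc)" by (simp add: n2 cc_def)
    also have "\<dots> = cc" using ccp by (simp add: power2_eq_square)
    finally show ?thesis by (simp add: cc_def)
  qed
  have AB: "A + B = n *\<^sub>R m" using np by (simp add: m_def)
  show ?thesis
  proof (rule that[OF nm Am0 Bm dbl])
    fix \<alpha> \<beta> :: real assume a: "\<alpha> \<ge> 0" "\<beta> \<ge> 0"
    show "\<exists>a b. a \<ge> 0 \<and> b \<ge> 0 \<and>
        (\<alpha> *\<^sub>R A + \<beta> *\<^sub>R B = a *\<^sub>R A + b *\<^sub>R m \<or> \<alpha> *\<^sub>R A + \<beta> *\<^sub>R B = a *\<^sub>R m + b *\<^sub>R B)"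
    proof (cases "\<alpha> \<ge> \<beta>")
      case True
      have "\<alpha> *\<^sub>R A + \<beta> *\<^sub>R B = (\<alpha> - \<beta>) *\<^sub>R A + \<beta> *\<^sub>R (A + B)" by (simp add: algebra_simps)
      also have "\<dots> = (\<alpha> - \<beta>) *\<^sub>R A + (\<beta> * n) *\<^sub>R m" by (simp add: AB)
      finally show ?thesis using True a np by (intro exI[of _ "\<alpha> - \<beta>"] exI[of _ "\<beta> * n"]) auto
    next
      case False
      have "\<alpha> *\<^sub>R A + \<beta> *\<^sub>R B = \<alpha> *\<^sub>R (A + B) + (\<beta> - \<alpha>) *\<^sub>R B" by (simp add: algebra_simps)
      also have "\<dots> = (\<alpha> * n) *\<^sub>R m + (\<beta> - \<alpha>) *\<^sub>R B" by (simp add: AB)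
      finally show ?thesis using False a np by (intro exI[of _ "\<alpha> * n"] exI[of _ "\<beta> - \<alpha>"]) auto
    qed
  qed
next
  case True
  then have B: "B = - A" by (simp add: eq_neg_iff_add_eq_0 add.commute)
  define m :: "real^2" where "m = (\<chi> i. if i = 1 then - (A$2) else A$1)"
  have m1: "m$1 = - (A$2)" "m$2 = A$1" by (simp_all add: m_def)
  have AA: "A \<bullet> A = 1" using nA by (simp add: power2_norm_eq_inner[symmetric])
  have "m \<bullet> m = A \<bullet> A" by (simp add: inner2 m1 algebra_simps)
  then have nm: "norm m = 1" using AA by (simp add: norm_eq_sqrt_inner)
  have Am: "A \<bullet> m = 0" by (simp add: inner2 m1 algebra_simps)
  have Bm: "B \<bullet> m = A \<bullet> m" using Am by (simp add: B)
  have dbl: "2 * (A \<bullet> m)\<^sup>2 - 1 = A \<bullet> B" using Am AA by (simp add: B)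
  show ?thesis
  proof (rule that[OF nm _ Bm dbl])
    show "A \<bullet> m \<ge> 0" using Am by simp
    fix \<alpha> \<beta> :: real assume a: "\<alpha> \<ge> 0" "\<beta> \<ge> 0"
    show "\<exists>a b. a \<ge> 0 \<and> b \<ge> 0 \<and>
        (\<alpha> *\<^sub>R A + \<beta> *\<^sub>R B = a *\<^sub>R A + b *\<^sub>R m \<or> \<alpha> *\<^sub>R A + \<beta> *\<^sub>R B = a *\<^sub>R m + b *\<^sub>R B)"
    proof (cases "\<alpha> \<ge> \<beta>")
      case True
      have "\<alpha> *\<^sub>R A + \<beta> *\<^sub>R B = (\<alpha> - \<beta>) *\<^sub>R A + 0 *\<^sub>R m" by (simp add: B algebra_simps)
      then show ?thesis using True a by (intro exI[of _ "\<alpha> - \<beta>"] exI[of _ 0]) auto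
    next
      case False
      have "\<alpha> *\<^sub>R A + \<beta> *\<^sub>R B = 0 *\<^sub>R m + (\<beta> - \<alpha>) *\<^sub>R B" by (simp add: B algebra_simps)
      then show ?thesis using False a by (intro exI[of _ 0] exI[of _ "\<beta> - \<alpha>"]) auto
    qed
  qed
qed

lemma sector_cone:
  "sector 0 A B \<subseteq> {\<alpha> *\<^sub>R A + \<beta> *\<^sub>R B | \<alpha> \<beta>. \<alpha> \<ge> 0 \<and> \<beta> \<ge> 0}"
  unfolding sector_def
proof (rule hull_minimal)
  show "{0 + t *\<^sub>R (A - 0) |t. 0 \<le> t} \<union> {0 + t *\<^sub>R (B - 0) |t. 0 \<le> t}
      \<subseteq> {\<alpha> *\<^sub>R A + \<beta> *\<^sub>R B | \<alpha> \<beta>. \<alpha> \<ge> 0 \<and> \<beta> \<ge> 0}"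
  proof
    fix x assume "x \<in> {0 + t *\<^sub>R (A - 0) |t. 0 \<le> t} \<union> {0 + t *\<^sub>R (B - 0) |t. 0 \<le> t}"
    then obtain t where t: "t \<ge> 0" "x = t *\<^sub>R A \<or> x = t *\<^sub>R B" by auto
    have "x = t *\<^sub>R A + 0 *\<^sub>R B \<or> x = 0 *\<^sub>R A + t *\<^sub>R B" using t(2) by auto
    then show "x \<in> {\<alpha> *\<^sub>R A + \<beta> *\<^sub>R B | \<alpha> \<beta>. \<alpha> \<ge> 0 \<and> \<beta> \<ge> 0}"
      using t(1) by blast
  qed
  show "convex {\<alpha> *\<^sub>R A + \<beta> *\<^sub>R B | \<alpha> \<beta>. \<alpha> \<ge> 0 \<and> \<beta> \<ge> 0}"
    unfolding convex_def
  proof (intro ballI allI impI)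
    fix x y and u v :: real
    assume x: "x \<in> {\<alpha> *\<^sub>R A + \<beta> *\<^sub>R B | \<alpha> \<beta>. \<alpha> \<ge> 0 \<and> \<beta> \<ge> 0}"
      and y: "y \<in> {\<alpha> *\<^sub>R A + \<beta> *\<^sub>R B | \<alpha> \<beta>. \<alpha> \<ge> 0 \<and> \<beta> \<ge> 0}"
      and u: "0 \<le> u" and v: "0 \<le> v" and "u + v = 1"
    obtain a1 b1 where 1: "x = a1 *\<^sub>R A + b1 *\<^sub>R B" "a1 \<ge> 0" "b1 \<ge> 0" using x by blast
    obtain a2 b2 where 2: "y = a2 *\<^sub>R A + b2 *\<^sub>R B" "a2 \<ge> 0" "b2 \<ge> 0" using y by blast
    have "u *\<^sub>R x + v *\<^sub>R y = (u * a1 + v * a2) *\<^sub>R A + (u * b1 + v * b2) *\<^sub>R B"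
      by (simp add: 1 2 algebra_simps)
    moreover have "u * a1 + v * a2 \<ge> 0" "u * b1 + v * b2 \<ge> 0" using 1 2 u v by simp_all
    ultimately show "u *\<^sub>R x + v *\<^sub>R y \<in> {\<alpha> *\<^sub>R A + \<beta> *\<^sub>R B | \<alpha> \<beta>. \<alpha> \<ge> 0 \<and> \<beta> \<ge> 0}"
      by blast
  qed
qed

lemma angle_facts:
  fixes c c1 :: real
  assumes c1: "0 \<le> c1" "c1 \<le> 1" and dbl: "2 * c1\<^sup>2 - 1 = c"
  shows "arccos c = 2 * arccos c1" "1 - c1 \<le> (arccos c1)\<^sup>2 / 2"
proof -
  define x where "x = arccos c1"
  have x: "0 \<le> x" "x \<le> pi / 2" using c1 arccos_lbound[of c1] arccos_le_pi2[of c1] by (simp_all add: x_def)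
  have cx: "cos x = c1" using c1 by (simp add: x_def)
  have "cos (2 * x) = c" using dbl cx by (simp add: cos_double_cos)
  then show "arccos c = 2 * arccos c1" using x arccos_cos[of "2 * x"] by (simp add: x_def)
  have "cos (2 * (x / 2)) = 1 - 2 * sin (x / 2) ^ 2" by (rule cos_double_sin)
  then have "1 - c1 = 2 * sin (x / 2) ^ 2" using cx by simp
  also have "sin (x / 2) ^ 2 \<le> (x / 2) ^ 2"
    using abs_sin_x_le_abs_x[of "x/2"] by (metis abs_le_square_iff)
  finally show "1 - c1 \<le> (arccos c1)\<^sup>2 / 2" by (simp add: x_def power_divide)
qed

lemma exp2_bound: "exp (2::real) < 7.4"
proof -
  have "exp (2::real) = exp 1 * exp 1" by (simp add: exp_add[symmetric])
  also have "\<dots> < 2.72 * 2.72" using e_less_272 by (intro mult_strict_mono) auto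
  finally show ?thesis by simp
qed


lemma final_num:
  fixes M0 M1 k E \<rho> a x :: real
  assumes M0: "M0 > 0" and M1: "M1 > 0" and M: "M1 \<le> k\<^sup>2 * M0" and k: "0 < k" "k < 3.2"
    and E: "E > 1" and rho: "\<rho> = 1 - 1 / E" and a: "a \<ge> 0" and x: "x \<ge> 0" and ax: "a\<^sup>2 \<le> x\<^sup>2 / 2"
  shows "pi * E\<^sup>2 / M0 * (2 * \<rho>\<^sup>2 * a) \<le> pi * E ^ 4 / M1 * x"
proof -
  have r0: "\<rho> \<ge> 0" using E by (simp add: rho)
  have rE: "\<rho> \<le> E / 4"
  proof -
    have "(E - 2)\<^sup>2 \<ge> 0" by simp
    then have "4 * (E - 1) \<le> E * E" by (simp add: power2_eq_square algebra_simps)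
    then show ?thesis using E by (simp add: rho field_simps)
  qed
  have r2: "\<rho>\<^sup>2 \<le> E\<^sup>2 / 16"
  proof -
    have "\<rho>\<^sup>2 \<le> (E/4)\<^sup>2" by (rule power_mono[OF rE r0])
    then show ?thesis by (simp add: power_divide)
  qed
  have k2: "k\<^sup>2 \<le> (16/5)\<^sup>2" by (rule power_mono) (use k in auto)
  have ak: "a * k\<^sup>2 / 8 \<le> x"
  proof -
    have kk: "(k\<^sup>2)\<^sup>2 \<le> ((16/5)\<^sup>2)\<^sup>2" by (rule power_mono[OF k2]) simp
    have h1: "a\<^sup>2 * (k\<^sup>2)\<^sup>2 \<le> (x\<^sup>2 / 2) * ((16/5)\<^sup>2)\<^sup>2"
      by (rule mult_mono[OF ax kk]) simp_all
    have c: "((16/5::real)\<^sup>2)\<^sup>2 \<le> 128" unfolding power2_eq_square by simp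
    have h2: "(x\<^sup>2 / 2) * ((16/5)\<^sup>2)\<^sup>2 \<le> (x\<^sup>2 / 2) * 128"
      by (rule mult_left_mono[OF c]) simp
    have eq: "(a * k\<^sup>2 / 8)\<^sup>2 = a\<^sup>2 * (k\<^sup>2)\<^sup>2 / 64" by (simp add: power_mult_distrib power_divide)
    have "(a * k\<^sup>2 / 8)\<^sup>2 \<le> x\<^sup>2" unfolding eq using h1 h2 by linarith
    then show ?thesis by (rule power2_le_imp_le[OF _ x])
  qed
  have step1: "2 * \<rho>\<^sup>2 * a * k\<^sup>2 \<le> E\<^sup>2 * x"
  proof -
    have "2 * \<rho>\<^sup>2 * a * k\<^sup>2 \<le> 2 * (E\<^sup>2 / 16) * a * k\<^sup>2"
      using mult_right_mono[OF mult_left_mono[OF r2, of 2], of "a * k\<^sup>2"] a by (simp add: mult.assoc)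
    also have "\<dots> = E\<^sup>2 * (a * k\<^sup>2 / 8)" by simp
    also have "\<dots> \<le> E\<^sup>2 * x" by (rule mult_left_mono[OF ak]) simp
    finally show ?thesis .
  qed
  have step2: "E\<^sup>2 * (2 * \<rho>\<^sup>2 * a) * M1 \<le> E ^ 4 * x * M0"
  proof -
    have "E\<^sup>2 * (2 * \<rho>\<^sup>2 * a) * M1 \<le> E\<^sup>2 * (2 * \<rho>\<^sup>2 * a) * (k\<^sup>2 * M0)"
      by (rule mult_left_mono[OF M]) (use r0 a in simp)
    also have "\<dots> = E\<^sup>2 * (2 * \<rho>\<^sup>2 * a * k\<^sup>2) * M0" by simp
    also have "\<dots> \<le> E\<^sup>2 * (E\<^sup>2 * x) * M0"
      by (rule mult_right_mono[OF mult_left_mono[OF step1]]) (use M0 in simp_all)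
    also have "\<dots> = E ^ 4 * x * M0" by (simp add: power2_eq_square power4_eq_xxxx)
    finally show ?thesis .
  qed
  have "pi * E\<^sup>2 / M0 * (2 * \<rho>\<^sup>2 * a) = pi * (E\<^sup>2 * (2 * \<rho>\<^sup>2 * a) * M1) / (M0 * M1)"
    using M0 M1 by (simp add: field_simps)
  also have "\<dots> \<le> pi * (E ^ 4 * x * M0) / (M0 * M1)"
    by (rule divide_right_mono[OF mult_left_mono[OF step2]]) (use M0 M1 in simp_all)
  also have "\<dots> = pi * E ^ 4 / M1 * x" using M0 M1 by (simp add: field_simps)
  finally show ?thesis .
qed


theorem lemma2p6:
  fixes C :: "(real^2) set" and A B :: "real^2" and R :: real
  assumes "open C" and "bounded C" and "convex C" and "C \<noteq> {}"
    and "0 \<in> C" and "C \<subseteq> ball 0 1"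
    and "norm A = 1" and "norm B = 1" and "A \<noteq> B"
    and "R > 0"
  shows "hilbert_measure C (hilbert_ball C 0 R \<inter> sector 0 A B)
           \<le> ennreal (pi * exp (8 * R) / measure lebesgue (hilbert_ball C 0 1)
                      * (arccos (A \<bullet> B) / 2))"
proof -
  interpret cb0 C by unfold_locales (use assms in auto)
  define E where "E = exp (2 * R)"
  have E1: "E > 1" using assms(10) by (simp add: E_def)
  define M0 where "M0 = measure lebesgue (finsler_ball C 0)"
  define M1 where "M1 = measure lebesgue (hilbert_ball C 0 1)"
  define k where "k = (exp 2 - 1) / (2::real)"
  have kp: "k > 0" using exp_gt_one[of 2] by (simp add: k_def)
  have k32: "k < 3.2" using exp2_bound by (simp add: k_def)
  have M1le: "M1 \<le> k\<^sup>2 * M0" using meas1 by (simp add: M0_def M1_def k_def)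
  have M1p: "M1 > 0" using meas_pos by (simp add: M1_def)
  have M0p: "M0 > 0"
  proof (rule ccontr)
    assume "\<not> M0 > 0"
    then have "k\<^sup>2 * M0 \<le> 0" using kp by (simp add: mult_nonneg_nonpos)
    then show False using M1le M1p by linarith
  qed
  have om: "omega_vol TYPE(real^2) = pi"
  proof -
    have "omega_vol TYPE(real^2) = measure lborel (ball (0::real^2) 1)" by (simp add: omega_vol_def)
    also have "\<dots> = pi" using circle_area[of 1 "0::real^2"] by simp
    finally show ?thesis .
  qed
  define K where "K = pi * E\<^sup>2 / M0"
  have K0: "K \<ge> 0" using M0p by (simp add: K_def)
  have ptw: "omega_vol TYPE(real^2) / measure lebesgue (finsler_ball C p) \<le> K"
    if p: "p \<in> hilbert_ball C 0 R" for p
  proof -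
    have pC: "p \<in> C" and Ec: "E * (1 - gge C 0 p) > 1" using hR_facts[OF p] by (auto simp: E_def)
    define c where "c = 1 - gge C 0 p"
    have cp: "c > 0" using pC mem_iff by (simp add: c_def)
    have mB: "c\<^sup>2 * M0 \<le> measure lebesgue (finsler_ball C p)"
      using meas2[OF pC] by (simp add: c_def M0_def)
    have Ec2: "(E * c)\<^sup>2 \<ge> 1" using Ec by (simp add: c_def one_le_power less_imp_le)
    have "pi \<le> K * (c\<^sup>2 * M0)"
    proof -
      have "K * (c\<^sup>2 * M0) = pi * (E * c)\<^sup>2" using M0p by (simp add: K_def power_mult_distrib)
      also have "\<dots> \<ge> pi * 1" using Ec2 by (intro mult_left_mono) auto
      finally show ?thesis by simp
    qed
    also have "\<dots> \<le> K * measure lebesgue (finsler_ball C p)" by (rule mult_left_mono[OF mB K0])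
    finally have "pi \<le> K * measure lebesgue (finsler_ball C p)" .
    moreover have "measure lebesgue (finsler_ball C p) > 0"
      using mB cp M0p by (smt (verit) mult_pos_pos zero_less_power)
    ultimately show ?thesis by (simp add: om divide_le_eq mult.commute)
  qed
  obtain m where nm: "norm m = 1" and Am0: "A \<bullet> m \<ge> 0" and Bm: "B \<bullet> m = A \<bullet> m"
    and dbl: "2 * (A \<bullet> m)\<^sup>2 - 1 = A \<bullet> B"
    and cone: "\<And>\<alpha> \<beta>. \<alpha> \<ge> 0 \<Longrightarrow> \<beta> \<ge> 0 \<Longrightarrow> (\<exists>a b. a \<ge> 0 \<and> b \<ge> 0 \<and>
        (\<alpha> *\<^sub>R A + \<beta> *\<^sub>R B = a *\<^sub>R A + b *\<^sub>R m \<or> \<alpha> *\<^sub>R A + \<beta> *\<^sub>R B = a *\<^sub>R m + b *\<^sub>R B))"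
    using bisector[OF assms(7,8)] by blast
  define c1 where "c1 = A \<bullet> m"
  have c1: "0 \<le> c1" "c1 \<le> 1"
    using Am0 Cauchy_Schwarz_ineq2[of A m] assms(7) nm by (auto simp: c1_def)
  have mB: "m \<bullet> B = c1" using Bm by (simp add: c1_def inner_commute)
  define \<rho> where "\<rho> = 1 - exp (- 2 * R)"
  have rho_p: "\<rho> > 0" using assms(10) by (simp add: \<rho>_def)
  have rhoE: "\<rho> = 1 - 1 / E"
  proof -
    have "exp (2 * R) * exp (- 2 * R) = 1" by (simp add: exp_add[symmetric])
    then show ?thesis by (simp add: \<rho>_def E_def field_simps)
  qed
  define L where "L = \<rho> * sqrt (2 + 2 * c1) / (1 + c1)"
  define T1 where "T1 = convex hull {0, L *\<^sub>R A, L *\<^sub>R m}"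
  define T2 where "T2 = convex hull {0, L *\<^sub>R m, L *\<^sub>R B}"
  have region: "hilbert_ball C 0 R \<inter> sector 0 A B \<subseteq> T1 \<union> T2"
  proof
    fix p assume p: "p \<in> hilbert_ball C 0 R \<inter> sector 0 A B"
    have np: "norm p < \<rho>" using hR_facts(3)[of p R] p by (simp add: \<rho>_def)
    obtain \<alpha> \<beta> where ab: "p = \<alpha> *\<^sub>R A + \<beta> *\<^sub>R B" "\<alpha> \<ge> 0" "\<beta> \<ge> 0"
      using p sector_cone[of A B] by blast
    obtain a b where a: "a \<ge> 0" "b \<ge> 0"
      and cases: "p = a *\<^sub>R A + b *\<^sub>R m \<or> p = a *\<^sub>R m + b *\<^sub>R B"
      using cone[OF ab(2,3)] ab(1) by blast
    show "p \<in> T1 \<union> T2" using cases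
    proof (elim disjE)
      assume h: "p = a *\<^sub>R A + b *\<^sub>R m"
      have "a *\<^sub>R A + b *\<^sub>R m \<in> T1"
        using tri_incl[OF assms(7) nm Am0 rho_p a, of ] np h by (simp add: T1_def L_def c1_def)
      then show ?thesis using h by simp
    next
      assume h: "p = a *\<^sub>R m + b *\<^sub>R B"
      have "a *\<^sub>R m + b *\<^sub>R B \<in> T2"
        using tri_incl[OF nm assms(8) _ rho_p a] mB c1 np h by (simp add: T2_def L_def)
      then show ?thesis using h by simp
    qed
  qed
  define s1 where "s1 = sqrt (1 - c1\<^sup>2)"
  have c1sq: "c1\<^sup>2 \<le> 1" using c1 by (simp add: power_le_one)
  have s10: "s1 \<ge> 0" using c1sq by (simp add: s1_def)
  have dA: "\<bar>det2 A m\<bar> = s1"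
    using det2_sq[OF assms(7) nm] by (simp add: s1_def c1_def real_sqrt_abs[symmetric])
  have dB: "\<bar>det2 m B\<bar> = s1"
    using det2_sq[OF nm assms(8)] mB by (simp add: s1_def real_sqrt_abs[symmetric])
  have mT1: "measure lebesgue T1 = \<rho>\<^sup>2 * s1 / (1 + c1)"
    using tri_meas[of A m \<rho>] Am0 dA by (simp add: T1_def L_def c1_def)
  have mT2: "measure lebesgue T2 = \<rho>\<^sup>2 * s1 / (1 + c1)"
    using tri_meas[of m B \<rho>] mB c1 dB by (simp add: T2_def L_def)
  have T1m: "T1 \<in> lmeasurable" unfolding T1_def
    by (intro lmeasurable_compact finite_imp_compact_convex_hull) auto
  have T2m: "T2 \<in> lmeasurable" unfolding T2_def
    by (intro lmeasurable_compact finite_imp_compact_convex_hull) auto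
  define X where "X = hilbert_ball C 0 R \<inter> sector 0 A B"
  have "hilbert_measure C X
      = (\<integral>\<^sup>+ p. ennreal (omega_vol TYPE(real^2) / measure lebesgue (finsler_ball C p)) * indicator X p \<partial>lebesgue)"
    by (simp add: hilbert_measure_def)
  also have "\<dots> \<le> (\<integral>\<^sup>+ p. ennreal K * indicator (T1 \<union> T2) p \<partial>lebesgue)"
  proof (rule nn_integral_mono)
    fix p
    show "ennreal (omega_vol TYPE(real^2) / measure lebesgue (finsler_ball C p)) * indicator X p
        \<le> ennreal K * indicator (T1 \<union> T2) p"
    proof (cases "p \<in> X")
      case True
      then have "p \<in> T1 \<union> T2" using region by (auto simp: X_def)
      moreover have "ennreal (omega_vol TYPE(real^2) / measure lebesgue (finsler_ball C p)) \<le> ennreal K"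
        using ptw[of p] True by (intro ennreal_leI) (auto simp: X_def)
      ultimately show ?thesis using True by simp
    qed simp
  qed
  also have "\<dots> = ennreal K * emeasure lebesgue (T1 \<union> T2)"
    by (rule nn_integral_cmult_indicator) (use T1m T2m in auto)
  also have "\<dots> \<le> ennreal K * (emeasure lebesgue T1 + emeasure lebesgue T2)"
    by (rule mult_left_mono[OF emeasure_subadditive]) (use T1m T2m in auto)
  also have "\<dots> = ennreal (K * (2 * \<rho>\<^sup>2 * (s1 / (1 + c1))))"
  proof -
    define Q where "Q = 2 * \<rho>\<^sup>2 * (s1 / (1 + c1))"
    have Q0: "Q \<ge> 0" using c1 s10 by (simp add: Q_def)
    have "emeasure lebesgue T1 + emeasure lebesgue T2 = ennreal (measure lebesgue T1) + ennreal (measure lebesgue T2)"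
      using T1m T2m by (simp add: emeasure_eq_measure2)
    also have "\<dots> = ennreal (measure lebesgue T1 + measure lebesgue T2)"
      by (rule ennreal_plus[symmetric]) (use T1m T2m in auto)
    also have "measure lebesgue T1 + measure lebesgue T2 = Q" unfolding mT1 mT2 Q_def by simp
    finally have "ennreal K * (emeasure lebesgue T1 + emeasure lebesgue T2) = ennreal K * ennreal Q" by simp
    also have "\<dots> = ennreal (K * Q)" using ennreal_mult[OF K0 Q0] by simp
    finally show ?thesis by (simp add: Q_def)
  qed
  also have "\<dots> \<le> ennreal (pi * exp (8 * R) / M1 * (arccos (A \<bullet> B) / 2))"
  proof (rule ennreal_leI)
    define x where "x = arccos c1"
    have ang: "arccos (A \<bullet> B) = 2 * arccos c1" "1 - c1 \<le> (arccos c1)\<^sup>2 / 2"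
      using angle_facts[OF c1] dbl by (auto simp: c1_def)
    have x0: "x \<ge> 0" using c1 arccos_lbound[of c1] by (simp add: x_def)
    define a where "a = s1 / (1 + c1)"
    have a0: "a \<ge> 0" using c1 s10 by (simp add: a_def)
    have "a\<^sup>2 = (1 - c1\<^sup>2) / (1 + c1)\<^sup>2" using c1 c1sq by (simp add: a_def s1_def power_divide)
    also have "\<dots> = (1 - c1) / (1 + c1)"
    proof -
      have "1 - c1\<^sup>2 = (1 - c1) * (1 + c1)" by (simp add: power2_eq_square algebra_simps)
      moreover have "(1 + c1)\<^sup>2 = (1 + c1) * (1 + c1)" by (simp add: power2_eq_square)
      moreover have "(1 - c1) * (1 + c1) / ((1 + c1) * (1 + c1)) = (1 - c1) / (1 + c1)"
        by (rule nonzero_mult_divide_mult_cancel_right) (use c1 in simp)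
      ultimately show ?thesis by simp
    qed
    also have "\<dots> \<le> 1 - c1"
    proof -
      have "(1 - c1) * 1 \<le> (1 - c1) * (1 + c1)" by (rule mult_left_mono) (use c1 in auto)
      then show ?thesis using c1 by (simp add: divide_le_eq)
    qed
    also have "\<dots> \<le> x\<^sup>2 / 2" using ang by (simp add: x_def)
    finally have ax: "a\<^sup>2 \<le> x\<^sup>2 / 2" .
    have "K * (2 * \<rho>\<^sup>2 * (s1 / (1 + c1))) \<le> pi * E ^ 4 / M1 * x"
      using final_num[OF M0p M1p M1le kp k32 E1 rhoE a0 x0 ax] by (simp add: K_def a_def)
    also have "E ^ 4 = exp (8 * R)"
      by (simp add: E_def exp_of_nat_mult[symmetric])
    also have "x = arccos (A \<bullet> B) / 2" using ang by (simp add: x_def)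
    finally show "K * (2 * \<rho>\<^sup>2 * (s1 / (1 + c1))) \<le> pi * exp (8 * R) / M1 * (arccos (A \<bullet> B) / 2)" .
  qed
  finally show ?thesis by (simp add: X_def M1_def)
qed


end
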